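(* Let $U\in C^{3}(\mathbb{R}^{d})$ be a Morse function, $\boldsymbol{\ell}$ a $C^{1}$ vector field with $\nabla U\cdot\boldsymbol{\ell}\equiv0$, and $\boldsymbol{\sigma}$ a critical point of $U$ such that $\mathbb{H}=\nabla^{2}U(\boldsymbol{\sigma})$ has eigenvalues $-\lambda_{1},\lambda_{2},\dots,\lambda_{d}$ with $\lambda_{1},\dots,\lambda_{d}>0$ and corresponding orthonormal eigenvectors $\boldsymbol{e}_{1},\dots,\boldsymbol{e}_{d}$. Let $\mathbb{L}=D\boldsymbol{\ell}(\boldsymbol{\sigma})$, let $-\mu$ be the unique negative eigenvalue of $\mathbb{H}-\mathbb{L}^{\dagger}$, and let $\boldsymbol{v}$ be a unit eigenvector of $\mathbb{H}-\mathbb{L}^{\dagger}$ for $-\mu$. Then \[ \boldsymbol{v}\cdot\mathbb{H}^{-1}\boldsymbol{v}\,=\,-\frac{(\boldsymbol{v}\cdot\boldsymbol{e}_{1})^{2}}{\lambda_{1}}+\sum_{k=2}^{d}\frac{(\boldsymbol{v}\cdot\boldsymbol{e}_{k})^{2}}{\lambda_{k}}\,=\,-\frac{1}{\mu}\,<\,0. \]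
   Context: $\mathbb{L}^{\dagger}$ is the transpose of $\mathbb{L}$. Under these hypotheses $\mathbb{H}-\mathbb{L}^{\dagger}$ is similar to $\mathbb{H}+\mathbb{L}$, which is invertible with exactly one negative eigenvalue, so $\mu>0$ is well defined. *)

theory Defs
  imports "HOL-Analysis.Analysis"
begin

definition jacobian :: "(real^'n \<Rightarrow> real^'m) \<Rightarrow> real^'n \<Rightarrow> real^'n^'m" where
  "jacobian f x = matrix (frechet_derivative f (at x))"

definition C1_map :: "(real^'n \<Rightarrow> real^'m) \<Rightarrow> bool" where
  "C1_map f \<longleftrightarrow> (\<forall>x. f differentiable (at x)) \<and> continuous_on UNIV (jacobian f)"

definition grad :: "(real^'n \<Rightarrow> real) \<Rightarrow> real^'n \<Rightarrow> real^'n" where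
  "grad U x = (\<chi> i. frechet_derivative U (at x) (axis i 1))"

definition hessian :: "(real^'n \<Rightarrow> real) \<Rightarrow> real^'n \<Rightarrow> real^'n^'n" where
  "hessian U x = jacobian (grad U) x"

definition C3_fun :: "(real^'n \<Rightarrow> real) \<Rightarrow> bool" where
  "C3_fun U \<longleftrightarrow> (\<forall>x. U differentiable (at x)) \<and> C1_map (grad U)
      \<and> (\<forall>i. C1_map (\<lambda>x. hessian U x $ i))"

definition morse :: "(real^'n \<Rightarrow> real) \<Rightarrow> bool" where
  "morse U \<longleftrightarrow> (\<forall>x. grad U x = 0 \<longrightarrow> invertible (hessian U x))"

definition is_eigenvalue :: "real^'n^'n \<Rightarrow> real \<Rightarrow> bool" where
  "is_eigenvalue A c \<longleftrightarrow> (\<exists>w. w \<noteq> 0 \<and> A *v w = c *\<^sub>R w)"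

end

theory Submission
  imports Defs
begin

lemma deriv_quot:
  fixes F :: "real \<Rightarrow> 'a::real_normed_vector"
  assumes d: "(F has_derivative (\<lambda>t. t *\<^sub>R a)) (at 0)" and F0: "F 0 = 0"
  shows "((\<lambda>h. F h /\<^sub>R h) \<longlongrightarrow> a) (at 0)"
proof -
  have "(\<lambda>h. norm (F (0 + h) - F 0 - h *\<^sub>R a) / norm h) \<midarrow>0\<rightarrow> 0"
    using d unfolding has_derivative_at by blast
  hence "(\<lambda>h. norm (F h /\<^sub>R h - a)) \<midarrow>0\<rightarrow> 0"
  proof (rule Lim_transform_eventually)
    show "\<forall>\<^sub>F h in at 0. norm (F (0 + h) - F 0 - h *\<^sub>R a) / norm h = norm (F h /\<^sub>R h - a)"
      unfolding eventually_at_filter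
    proof (intro always_eventually allI impI)
      fix h :: real assume "h \<noteq> 0"
      hence "F h /\<^sub>R h - a = (1/h) *\<^sub>R (F h - h *\<^sub>R a)" by (simp add: algebra_simps divide_inverse)
      thus "norm (F (0 + h) - F 0 - h *\<^sub>R a) / norm h = norm (F h /\<^sub>R h - a)"
        using F0 by (simp add: divide_inverse mult.commute)
    qed
  qed
  hence "((\<lambda>h. F h /\<^sub>R h - a) \<longlongrightarrow> 0) (at 0)" by (simp add: tendsto_norm_zero_iff)
  hence "((\<lambda>h. (F h /\<^sub>R h - a) + a) \<longlongrightarrow> 0 + a) (at 0)" by (intro tendsto_add tendsto_const)
  thus ?thesis by simp
qed

lemma jac_works:
  fixes f :: "real^'a \<Rightarrow> real^'b"
  assumes "f differentiable (at x)"
  shows "(f has_derivative (\<lambda>h. jacobian f x *v h)) (at x)"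
  using assms Cartesian_Euclidean_Space.jacobian_works[of f "at x"]
  unfolding Defs.jacobian_def Cartesian_Euclidean_Space.jacobian_def by simp

lemma skew_aux:
  fixes G F :: "real^'n \<Rightarrow> real^'n" and H L :: "real^'n^'n"
  assumes dG: "(G has_derivative (\<lambda>h. H *v h)) (at s)"
    and dF: "(F has_derivative (\<lambda>h. L *v h)) (at s)"
    and orth: "\<And>x. G x \<bullet> F x = 0" and G0: "G s = 0"
    and surjH: "\<And>y. \<exists>x. H *v x = y"
  shows "F s = 0" "\<And>w. (H *v w) \<bullet> (L *v w) = 0"
proof -
  have "((\<lambda>x. G x \<bullet> F x) has_derivative (\<lambda>h. G s \<bullet> (L *v h) + (H *v h) \<bullet> F s)) (at s)"
    by (intro has_derivative_inner dG dF)
  moreover have "((\<lambda>x. G x \<bullet> F x) has_derivative (\<lambda>h. 0)) (at s)"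
    using orth by simp
  ultimately have eq: "(\<lambda>h. G s \<bullet> (L *v h) + (H *v h) \<bullet> F s) = (\<lambda>h. 0)"
    by (rule has_derivative_unique)
  obtain x where "H *v x = F s" using surjH by blast
  hence "F s \<bullet> F s = 0" using fun_cong[OF eq, of x] G0 by simp
  thus F0: "F s = 0" by simp
  fix w
  have lin: "((\<lambda>t. s + t *\<^sub>R w) has_derivative (\<lambda>t. t *\<^sub>R w)) (at 0)"
    by (auto intro!: derivative_eq_intros)
  have c1: "((G \<circ> (\<lambda>t. s + t *\<^sub>R w)) has_derivative ((\<lambda>h. H *v h) \<circ> (\<lambda>t. t *\<^sub>R w))) (at 0)"
    by (rule diff_chain_at[OF lin]) (simp add: dG)
  have c2: "((F \<circ> (\<lambda>t. s + t *\<^sub>R w)) has_derivative ((\<lambda>h. L *v h) \<circ> (\<lambda>t. t *\<^sub>R w))) (at 0)"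
    by (rule diff_chain_at[OF lin]) (simp add: dF)
  have l1: "((\<lambda>h. G (s + h *\<^sub>R w) /\<^sub>R h) \<longlongrightarrow> H *v w) (at 0)"
    by (rule deriv_quot) (use c1 G0 in \<open>simp_all add: o_def matrix_vector_mult_scaleR\<close>)
  have l2: "((\<lambda>h. F (s + h *\<^sub>R w) /\<^sub>R h) \<longlongrightarrow> L *v w) (at 0)"
    by (rule deriv_quot) (use c2 F0 in \<open>simp_all add: o_def matrix_vector_mult_scaleR\<close>)
  have l3: "((\<lambda>h. (G (s + h *\<^sub>R w) /\<^sub>R h) \<bullet> (F (s + h *\<^sub>R w) /\<^sub>R h)) \<longlongrightarrow> (H *v w) \<bullet> (L *v w)) (at (0::real))"
    by (intro tendsto_inner l1 l2)
  have "(\<lambda>h. (G (s + h *\<^sub>R w) /\<^sub>R h) \<bullet> (F (s + h *\<^sub>R w) /\<^sub>R h)) = (\<lambda>h. 0)"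
    using orth by (simp add: inner_scaleR_left inner_scaleR_right)
  with l3 have "((\<lambda>h. 0) \<longlongrightarrow> (H *v w) \<bullet> (L *v w)) (at (0::real))" by simp
  thus "(H *v w) \<bullet> (L *v w) = 0"
    using tendsto_const_iff[OF at_neq_bot] by metis
qed

lemma onb_expand:
  fixes e :: "'n \<Rightarrow> real^'n"
  assumes on: "\<And>i j. e i \<bullet> e j = (if i = j then 1 else 0)"
  shows "x = (\<Sum>k\<in>UNIV. (x \<bullet> e k) *\<^sub>R e k)"
proof -
  define E :: "real^'n^'n" where "E = (\<chi> k. e k)"
  have "E ** transpose E = mat 1"
    using on by (simp add: vec_eq_iff matrix_matrix_mult_def mat_def transpose_def
        inner_vec_def E_def)
  hence tE: "transpose E ** E = mat 1" by (simp add: matrix_left_right_inverse)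
  have "x = transpose E *v (E *v x)"
    by (simp add: matrix_vector_mul_assoc tE del: transpose_matrix_vector)
  also have "\<dots> = (\<Sum>k\<in>UNIV. (x \<bullet> e k) *\<^sub>R e k)"
    by (simp add: vec_eq_iff matrix_vector_mult_def transpose_def sum_component E_def
        inner_vec_def mult.commute del: transpose_matrix_vector)
  finally show ?thesis .
qed


theorem lemma8p1:
  fixes U :: "real^'n \<Rightarrow> real" and ell :: "real^'n \<Rightarrow> real^'n"
    and sigma v :: "real^'n" and lam :: "'n \<Rightarrow> real" and e :: "'n \<Rightarrow> real^'n"
    and i1 :: 'n and mu :: real
  assumes U_C3: "C3_fun U" and U_morse: "morse U"
    and l_C1: "C1_map ell" and orth: "\<And>x. grad U x \<bullet> ell x = 0"
    and crit: "grad U sigma = 0"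
    and lam_pos: "\<And>k. lam k > 0"
    and e_orthonormal: "\<And>i j. e i \<bullet> e j = (if i = j then 1 else 0)"
    and e_eigen: "\<And>k. hessian U sigma *v e k = (if k = i1 then - lam k else lam k) *\<^sub>R e k"
    and mu_pos: "mu > 0"
    and mu_eig: "is_eigenvalue (hessian U sigma - transpose (jacobian ell sigma)) (- mu)"
    and mu_unique: "\<And>c. c < 0 \<Longrightarrow> is_eigenvalue (hessian U sigma - transpose (jacobian ell sigma)) c \<Longrightarrow> c = - mu"
    and v_unit: "norm v = 1"
    and v_eig: "(hessian U sigma - transpose (jacobian ell sigma)) *v v = (- mu) *\<^sub>R v"
  shows "v \<bullet> (matrix_inv (hessian U sigma) *v v)
           = - (v \<bullet> e i1)\<^sup>2 / lam i1 + (\<Sum>k\<in>UNIV - {i1}. (v \<bullet> e k)\<^sup>2 / lam k)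
      \<and> - (v \<bullet> e i1)\<^sup>2 / lam i1 + (\<Sum>k\<in>UNIV - {i1}. (v \<bullet> e k)\<^sup>2 / lam k) = - 1 / mu
      \<and> - 1 / mu < 0"
proof -
  define H where "H = hessian U sigma"
  define L where "L = jacobian ell sigma"
  define s where "s k = (if k = i1 then - lam k else lam k)" for k
  have sne: "s k \<noteq> 0" for k using lam_pos[of k] by (auto simp add: s_def)
  have He: "H *v e k = s k *\<^sub>R e k" for k using e_eigen[of k] by (simp add: H_def s_def)
  have exp: "x = (\<Sum>k\<in>UNIV. (x \<bullet> e k) *\<^sub>R e k)" for x
    by (rule onb_expand) (rule e_orthonormal)
  have Hsum: "H *v (\<Sum>k\<in>UNIV. c k *\<^sub>R e k) = (\<Sum>k\<in>UNIV. (c k * s k) *\<^sub>R e k)" for c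
    by (simp add: linear_sum[OF matrix_vector_mul_linear] matrix_vector_mult_scaleR He)
  have Hx: "H *v x = (\<Sum>k\<in>UNIV. ((x \<bullet> e k) * s k) *\<^sub>R e k)" for x
    using Hsum[of "\<lambda>k. x \<bullet> e k"] exp[of x] by simp
  have symH: "(H *v x) \<bullet> y = x \<bullet> (H *v y)" for x y
  proof -
    have "(H *v x) \<bullet> y = (\<Sum>k\<in>UNIV. (x \<bullet> e k) * s k * (y \<bullet> e k))"
      unfolding Hx inner_sum_left inner_scaleR_left by (rule sum.cong) (simp_all add: inner_commute)
    moreover have "x \<bullet> (H *v y) = (\<Sum>k\<in>UNIV. (x \<bullet> e k) * s k * (y \<bullet> e k))"
      unfolding Hx inner_sum_right inner_scaleR_right by (rule sum.cong) (simp_all add: inner_commute)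
    ultimately show ?thesis by simp
  qed
  define P where "P y = (\<Sum>k\<in>UNIV. ((y \<bullet> e k) / s k) *\<^sub>R e k)" for y
  have HP: "H *v P y = y" for y
    unfolding P_def Hsum using sne exp[of y] by simp
  have surjH: "\<exists>x. H *v x = y" for y using HP by blast
  have invH: "invertible H"
    unfolding invertible_right_inverse matrix_right_invertible_surjective surj_def
    using HP by metis
  have "H ** matrix_inv H = mat 1 \<and> matrix_inv H ** H = mat 1"
    unfolding matrix_inv_def using invH[unfolded invertible_def] by (rule someI_ex)
  hence minv: "matrix_inv H *v (H *v x) = x" for x
    by (simp add: matrix_vector_mul_assoc)
  define u where "u = P v"
  have Hu: "H *v u = v" by (simp add: u_def HP)
  have invv: "matrix_inv H *v v = u" using minv[of u] Hu by simp
  have dG: "(grad U has_derivative (\<lambda>h. H *v h)) (at sigma)"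
    using U_C3 unfolding C3_fun_def C1_map_def H_def hessian_def by (blast intro: jac_works)
  have dF: "(ell has_derivative (\<lambda>h. L *v h)) (at sigma)"
    using l_C1 unfolding C1_map_def L_def by (blast intro: jac_works)
  have skew: "(H *v w) \<bullet> (L *v w) = 0" for w
    using skew_aux(2)[OF dG dF orth crit surjH] by blast
  have vv: "v \<bullet> v = 1" using v_unit by (simp add: norm_eq_sqrt_inner)
  have Mv: "H *v v - transpose L *v v = (- mu) *\<^sub>R v"
    using v_eig by (simp add: H_def L_def matrix_vector_mult_diff_rdistrib del: transpose_matrix_vector)
  have "u \<bullet> (H *v v) = 1" using symH[of u v] Hu vv by simp
  moreover have "u \<bullet> (transpose L *v v) = 0"
  proof -
    have "u \<bullet> (transpose L *v v) = (v v* L) \<bullet> u" by (simp add: inner_commute)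
    also have "\<dots> = v \<bullet> (L *v u)" by (rule dot_lmul_matrix)
    also have "\<dots> = 0" using skew[of u] Hu by simp
    finally show ?thesis .
  qed
  moreover have "u \<bullet> (H *v v - transpose L *v v) = - mu * (u \<bullet> v)"
    using Mv by simp
  ultimately have "1 = - mu * (u \<bullet> v)" by (simp add: inner_diff_right)
  hence uv: "v \<bullet> u = - 1 / mu" using mu_pos by (simp add: inner_commute field_simps)
  have "v \<bullet> u = (\<Sum>k\<in>UNIV. (v \<bullet> e k)\<^sup>2 / s k)"
    by (simp add: u_def P_def inner_sum_right power2_eq_square)
  also have "\<dots> = (v \<bullet> e i1)\<^sup>2 / s i1 + (\<Sum>k\<in>UNIV - {i1}. (v \<bullet> e k)\<^sup>2 / s k)"
    by (simp add: sum.remove)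
  also have "\<dots> = - (v \<bullet> e i1)\<^sup>2 / lam i1 + (\<Sum>k\<in>UNIV - {i1}. (v \<bullet> e k)\<^sup>2 / lam k)"
    by (simp add: s_def)
  finally have eq: "v \<bullet> u = - (v \<bullet> e i1)\<^sup>2 / lam i1 + (\<Sum>k\<in>UNIV - {i1}. (v \<bullet> e k)\<^sup>2 / lam k)" .
  have neg: "- 1 / mu < 0" using mu_pos by simp
  have "v \<bullet> (matrix_inv (hessian U sigma) *v v) = v \<bullet> u" using invv unfolding H_def by simp
  thus ?thesis using eq uv neg by simp
qed

end
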